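(* Let $a\ne b$ be letters and let $w=a^{n_1}b^{n_2}a$ or $w=ab^{n_2}a^{n_1}$, where $n_1\ge1$ and $n_2\in\{3,4\}$. Then every element of $\mathtt{BR}(w)$ is rich.
   Context: For a word $w=w_1\cdots w_n$, $w^R=w_n\cdots w_1$; $w$ is a palindrome if $w=w^R$; a factor of $w$ is a word $u$ with $w=puq$. A word $w$ is rich if the number of distinct nonempty palindromic factors of $w$ equals $|w|$. The block reversal of a nonempty word $w$ is $\mathtt{BR}(w)=\{B_t\cdots B_1 : w=B_1\cdots B_t,\ t\ge1,\ \text{each } B_i \text{ nonempty}\}$. *)

theory Defs
  imports Main
begin

definition is_factor :: "'a list \<Rightarrow> 'a list \<Rightarrow> bool" where
  "is_factor u w \<longleftrightarrow> (\<exists>p q. w = p @ u @ q)"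

definition palindrome :: "'a list \<Rightarrow> bool" where
  "palindrome w \<longleftrightarrow> w = rev w"

definition pal_factors :: "'a list \<Rightarrow> 'a list set" where
  "pal_factors w = {u. u \<noteq> [] \<and> palindrome u \<and> is_factor u w}"

definition rich :: "'a list \<Rightarrow> bool" where
  "rich w \<longleftrightarrow> card (pal_factors w) = length w"

definition BR :: "'a list \<Rightarrow> 'a list set" where
  "BR w = {concat (rev Bs) | Bs. Bs \<noteq> [] \<and> (\<forall>B\<in>set Bs. B \<noteq> []) \<and> concat Bs = w}"

end

theory Submission
  imports Defs "HOL-Library.Sublist"
begin


lemma is_factor_sublist: "is_factor u w = sublist u w"
  unfolding is_factor_def sublist_def by auto

lemma pal_factors_alt: "pal_factors w = {u. u \<noteq> [] \<and> u = rev u \<and> sublist u w}"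
  unfolding pal_factors_def palindrome_def is_factor_sublist by auto

lemma finite_pal: "finite (pal_factors w)"
proof -
  have "pal_factors w \<subseteq> set (sublists w)" by (auto simp: pal_factors_alt)
  thus ?thesis using finite_subset by blast
qed

lemma sublist_snoc_cases:
  assumes "sublist s (u @ [x])"
  shows "sublist s u \<or> suffix s (u @ [x])"
proof -
  from assms obtain p q where pq: "u @ [x] = p @ s @ q" unfolding sublist_def by auto
  show ?thesis
  proof (cases q rule: rev_cases)
    case Nil thus ?thesis using pq by (auto simp: suffix_def)
  next
    case (snoc q' y)
    hence "u = p @ s @ q'" using pq by auto
    thus ?thesis by auto
  qed
qed

lemma pal_suffix_short:
  assumes "s1 = rev s1" "s2 = rev s2" "suffix s1 (u @ [x])" "suffix s2 (u @ [x])"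
    "length s1 < length s2"
  shows "sublist s1 u"
proof -
  have "suffix s1 s2" using assms(3,4,5)
    by (metis suffix_length_suffix less_imp_le)
  then obtain z where z: "s2 = z @ s1" by (auto simp: suffix_def)
  hence "rev s2 = rev s1 @ rev z" by simp
  hence s2: "s2 = s1 @ rev z" using assms(1,2) by simp
  have "rev z \<noteq> []" using z assms(5) by auto
  then obtain z' y where zy: "rev z = z' @ [y]" by (cases "rev z" rule: rev_cases) auto
  from assms(4) obtain p where "u @ [x] = p @ s2" by (auto simp: suffix_def)
  hence "u @ [x] = p @ s1 @ z' @ [y]" using s2 zy by simp
  hence "u = p @ s1 @ z'" by simp
  thus ?thesis by auto
qed

definition newset :: "'a list \<Rightarrow> 'a \<Rightarrow> 'a list set" where
  "newset u x = pal_factors (u @ [x]) - pal_factors u"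

lemma pal_mono: "pal_factors u \<subseteq> pal_factors (u @ [x])"
  by (auto simp: pal_factors_alt sublist_def) (metis append_assoc)

lemma newset_card: "card (newset u x) \<le> 1"
proof -
  have fin: "finite (newset u x)" unfolding newset_def using finite_pal by auto
  have "\<forall>s1\<in>newset u x. \<forall>s2\<in>newset u x. s1 = s2"
  proof (intro ballI)
    fix s1 s2 assume h1: "s1 \<in> newset u x" and h2: "s2 \<in> newset u x"
    have a1: "s1 = rev s1" "sublist s1 (u@[x])" "\<not> sublist s1 u" using h1
      by (auto simp: newset_def pal_factors_alt)
    have a2: "s2 = rev s2" "sublist s2 (u@[x])" "\<not> sublist s2 u" using h2
      by (auto simp: newset_def pal_factors_alt)
    have sf1: "suffix s1 (u@[x])" using sublist_snoc_cases[OF a1(2)] a1(3) by blast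
    have sf2: "suffix s2 (u@[x])" using sublist_snoc_cases[OF a2(2)] a2(3) by blast
    have "length s1 = length s2"
    proof (rule ccontr)
      assume "length s1 \<noteq> length s2"
      hence "length s1 < length s2 \<or> length s2 < length s1" by auto
      thus False using pal_suffix_short[OF a1(1) a2(1) sf1 sf2] pal_suffix_short[OF a2(1) a1(1) sf2 sf1]
        a1(3) a2(3) by blast
    qed
    thus "s1 = s2" using sf1 sf2 by (metis suffix_length_suffix order_refl suffix_order.antisym)
  qed
  thus ?thesis using fin card_le_Suc0_iff_eq by (metis One_nat_def)
qed

lemma card_snoc: "card (pal_factors (u @ [x])) = card (pal_factors u) + card (newset u x)"
proof -
  have "pal_factors (u @ [x]) = pal_factors u \<union> newset u x" using pal_mono[of u x] unfolding newset_def by auto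
  moreover have "pal_factors u \<inter> newset u x = {}" unfolding newset_def by blast
  moreover have "finite (newset u x)" unfolding newset_def using finite_pal by blast
  ultimately show ?thesis using finite_pal[of u] card_Un_disjoint by metis
qed

lemma card_pal_le: "card (pal_factors w) \<le> length w"
proof (induction w rule: rev_induct)
  case Nil
  show ?case by (simp add: pal_factors_alt)
next
  case (snoc x xs)
  thus ?case using card_snoc[of xs x] newset_card[of xs x] by simp
qed

definition newpal :: "'a list \<Rightarrow> 'a list \<Rightarrow> 'a \<Rightarrow> bool" where
  "newpal s u x \<longleftrightarrow> s \<noteq> [] \<and> s = rev s \<and> suffix s (u @ [x]) \<and> \<not> sublist s u"

lemma rich_snoc:
  assumes "rich u" "newpal s u x"
  shows "rich (u @ [x])"
proof -
  have "sublist s (u @ [x])" using assms(2) unfolding newpal_def using suffix_imp_sublist by blast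
  hence "s \<in> newset u x" using assms(2)
    unfolding newpal_def newset_def pal_factors_alt by blast
  hence "card (newset u x) \<ge> 1" using finite_pal
    by (metis One_nat_def Suc_leI card_gt_0_iff empty_iff finite_Diff newset_def)
  hence "card (pal_factors (u@[x])) \<ge> length (u @ [x])"
    using assms(1) card_snoc[of u x] unfolding rich_def by simp
  thus ?thesis using card_pal_le[of "u@[x]"] unfolding rich_def by simp
qed

lemma rich_run:
  assumes "rich P" "\<And>t. t < r \<Longrightarrow> \<exists>s. newpal s (P @ replicate t c) c"
  shows "rich (P @ replicate r c)"
  using assms(2)
proof (induction r)
  case 0 thus ?case using assms(1) by simp
next
  case (Suc r)
  have "rich (P @ replicate r c)" using Suc by simp
  moreover obtain s where "newpal s (P @ replicate r c) c" using Suc.prems by blast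
  ultimately have "rich ((P @ replicate r c) @ [c])" by (rule rich_snoc)
  thus ?case by (simp add: replicate_append_same[symmetric])
qed



definition rich_check :: "'a list \<Rightarrow> bool" where
  "rich_check w \<longleftrightarrow> length (remdups (filter (\<lambda>u. u \<noteq> [] \<and> u = rev u) (sublists w))) = length w"

lemma rich_check_iff: "rich w \<longleftrightarrow> rich_check w"
proof -
  have "pal_factors w = set (filter (\<lambda>u. u \<noteq> [] \<and> u = rev u) (sublists w))"
    by (auto simp: pal_factors_alt)
  thus ?thesis unfolding rich_def rich_check_def by (simp add: length_remdups_card_conv)
qed

lemma all_small_check: "list_all (\<lambda>n. list_all rich_check (List.n_lists n [True, False])) [0..<8]"
  by code_simp

lemma rich_small_bool:
  fixes w :: "bool list"
  assumes "length w \<le> 7"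
  shows "rich w"
proof -
  have "w \<in> set (List.n_lists (length w) [True, False])"
    by (auto simp: set_n_lists)
  moreover have "length w \<in> set [0..<8]" using assms by auto
  ultimately show ?thesis using all_small_check rich_check_iff
    by (fastforce simp: list_all_iff)
qed



lemma rich_map:
  assumes "inj g" "rich w"
  shows "rich (map g w)"
proof -
  have "pal_factors (map g w) = map g ` pal_factors w"
  proof
    show "map g ` pal_factors w \<subseteq> pal_factors (map g w)"
      by (auto simp: pal_factors_alt intro: map_mono_sublist) (metis rev_map)
  next
    show "pal_factors (map g w) \<subseteq> map g ` pal_factors w"
    proof
      fix t assume "t \<in> pal_factors (map g w)"
      hence t: "t \<noteq> []" "t = rev t" "sublist t (map g w)" by (auto simp: pal_factors_alt)
      obtain u where u: "sublist u w" "t = map g u" using sublist_map_rightE[OF t(3)] by blast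
      have "map g u = map g (rev u)" using t(2) u(2) by (simp add: rev_map)
      hence "u = rev u" using assms(1) by (simp add: inj_map_eq_map)
      thus "t \<in> map g ` pal_factors w" using u t(1) by (auto simp: pal_factors_alt)
    qed
  qed
  moreover have "inj_on (map g) (pal_factors w)" using assms(1) inj_mapI by (metis injD inj_onI)
  ultimately show ?thesis using assms(2) unfolding rich_def by (simp add: card_image)
qed

fun expand :: "('a \<times> nat) list \<Rightarrow> 'a list" where
  "expand [] = []"
| "expand ((c,l)#rs) = replicate l c @ expand rs"

fun normal :: "('a \<times> nat) list \<Rightarrow> bool" where
  "normal [] = True"
| "normal [(c,l)] = (0 < l)"
| "normal ((c,l)#(d,m)#rs) = (0 < l \<and> c \<noteq> d \<and> normal ((d,m)#rs))"

fun rprefix :: "('a \<times> nat) list \<Rightarrow> ('a \<times> nat) list \<Rightarrow> bool" where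
  "rprefix [] U = True"
| "rprefix (s#S) [] = False"
| "rprefix [(c,l)] ((d,L)#U) = (c = d \<and> l \<le> L)"
| "rprefix ((c,l)#s#S) ((d,L)#U) = (c = d \<and> l = L \<and> rprefix (s#S) U)"

fun rstart :: "('a \<times> nat) list \<Rightarrow> 'a \<Rightarrow> nat \<Rightarrow> ('a \<times> nat) list \<Rightarrow> bool" where
  "rstart [] d L U = True"
| "rstart [(c,l)] d L U = (c = d \<and> l \<le> L)"
| "rstart ((c,l)#s#S) d L U = (c = d \<and> l \<le> L \<and> rprefix (s#S) U)"

fun rfactor :: "('a \<times> nat) list \<Rightarrow> ('a \<times> nat) list \<Rightarrow> bool" where
  "rfactor S [] = (S = [])"
| "rfactor S ((d,L)#U) = (rfactor S U \<or> rstart S d L U)"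

lemma normal_tl: "normal (s#S) \<Longrightarrow> normal S"
  by (cases s; cases S) auto

lemma normal_hd: "normal ((c,l)#S) \<Longrightarrow> 0 < l"
  by (cases S) auto

lemma normal_chg: "normal ((c,l)#S) \<Longrightarrow> 0 < k \<Longrightarrow> normal ((c,k)#S)"
  by (cases S) auto

lemma expand_nonempty: "normal S \<Longrightarrow> S \<noteq> [] \<Longrightarrow> expand S \<noteq> []"
  by (cases S) (auto dest: normal_hd)

lemma hd_expand: "normal ((c,l)#S) \<Longrightarrow> expand S = [] \<or> hd (expand S) \<noteq> c"
proof (cases S)
  case (Cons s S')
  assume n: "normal ((c,l)#S)"
  obtain d m where s: "s = (d,m)" by (cases s)
  have "0 < m" "c \<noteq> d" using n Cons s by (auto dest: normal_hd normal_tl)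
  thus ?thesis using Cons s by (cases m) auto
qed simp

lemma pre_rep:
  assumes "0<l" "0<L" "X = [] \<or> hd X \<noteq> c" "Y = [] \<or> hd Y \<noteq> d"
  shows "prefix (replicate l c @ X) (replicate L d @ Y) \<longleftrightarrow>
    (if X = [] then c = d \<and> l \<le> L else c = d \<and> l = L \<and> prefix X Y)"
  using assms
proof (induction l arbitrary: L)
  case 0 thus ?case by simp
next
  case (Suc l')
  obtain L' where L: "L = Suc L'" using Suc.prems(2) by (cases L) auto
  show ?case
  proof (cases "l' = 0")
    case True
    show ?thesis
    proof (cases "L' = 0")
      case True
      thus ?thesis using `l' = 0` L by auto
    next
      case False
      then obtain L'' where "L' = Suc L''" by (cases L') auto
      thus ?thesis using `l' = 0` L Suc.prems(3) by (cases X) auto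
    qed
  next
    case False
    then obtain l'' where l'': "l' = Suc l''" by (cases l') auto
    show ?thesis
    proof (cases "L' = 0")
      case True
      thus ?thesis using l'' L Suc.prems(4) by (cases Y) auto
    next
      case False
      have "prefix (replicate l' c @ X) (replicate L' d @ Y) \<longleftrightarrow>
        (if X = [] then c = d \<and> l' \<le> L' else c = d \<and> l' = L' \<and> prefix X Y)"
        using Suc.IH[of L'] False `l' \<noteq> 0` Suc.prems(3,4) by auto
      thus ?thesis using L by auto
    qed
  qed
qed

lemma rprefix_correct:
  "normal S \<Longrightarrow> normal U \<Longrightarrow> prefix (expand S) (expand U) \<longleftrightarrow> rprefix S U"
proof (induction S U rule: rprefix.induct)
  case (1 U) thus ?case by simp
next
  case (2 s S)
  thus ?case using expand_nonempty[of "s#S"] by simp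
next
  case (3 c l d L U)
  have "0 < l" "0 < L" using 3 by (auto dest: normal_hd)
  moreover have "expand U = [] \<or> hd (expand U) \<noteq> d" using hd_expand[OF "3.prems"(2)] .
  ultimately show ?case using pre_rep[of l L "[]" c "expand U" d] by simp
next
  case (4 c l s S d L U)
  have "0 < l" "0 < L" using 4 by (auto dest: normal_hd)
  moreover have "expand U = [] \<or> hd (expand U) \<noteq> d" using hd_expand[OF "4.prems"(2)] .
  moreover have "expand (s#S) = [] \<or> hd (expand (s#S)) \<noteq> c" using hd_expand[OF "4.prems"(1)] .
  moreover have "expand (s#S) \<noteq> []" using expand_nonempty[OF normal_tl[OF "4.prems"(1)]] by simp
  ultimately have "prefix (expand ((c,l)#s#S)) (expand ((d,L)#U)) \<longleftrightarrow>
      c = d \<and> l = L \<and> prefix (expand (s#S)) (expand U)"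
    using pre_rep[of l L "expand (s#S)" c "expand U" d] by simp
  hence "prefix (expand ((c,l)#s#S)) (expand ((d,L)#U)) \<longleftrightarrow>
      c = d \<and> l = L \<and> prefix (expand (s#S)) (expand U)" .
  moreover have "normal (s#S)" "normal U" using normal_tl[OF "4.prems"(1)] normal_tl[OF "4.prems"(2)] by auto
  ultimately show ?case using "4.IH" by auto
qed

lemma sublist_rep:
  "sublist s (replicate L d @ W) \<longleftrightarrow> sublist s W \<or> (\<exists>k. 0 < k \<and> k \<le> L \<and> prefix s (replicate k d @ W))"
proof (induction L)
  case 0 thus ?case by auto
next
  case (Suc L)
  have "sublist s (replicate (Suc L) d @ W) \<longleftrightarrow> prefix s (replicate (Suc L) d @ W) \<or> sublist s (replicate L d @ W)"
    using sublist_Cons_right[of s d "replicate L d @ W"] by simp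
  also have "\<dots> \<longleftrightarrow> sublist s W \<or> (\<exists>k. 0 < k \<and> k \<le> Suc L \<and> prefix s (replicate k d @ W))"
    using Suc.IH le_Suc_eq by auto
  finally show ?case .
qed

lemma rstart_correct:
  assumes "normal S" "0 < L"
  shows "(\<exists>k. 0 < k \<and> k \<le> L \<and> rprefix S ((d,k)#U)) \<longleftrightarrow> rstart S d L U"
proof (cases S)
  case Nil thus ?thesis using assms by auto
next
  case (Cons p S')
  obtain c l where p: "p = (c,l)" by (cases p)
  have "0 < l" using assms(1) Cons p normal_hd[of c l S'] by simp
  show ?thesis
  proof (cases S')
    case Nil thus ?thesis using assms Cons p \<open>0<l\<close> by auto
  next
    case (Cons s S'')
    thus ?thesis using assms \<open>S = p # S'\<close> p \<open>0<l\<close> by auto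
  qed
qed

lemma rfactor_correct:
  "normal S \<Longrightarrow> normal U \<Longrightarrow> sublist (expand S) (expand U) \<longleftrightarrow> rfactor S U"
proof (induction U)
  case Nil
  thus ?case using expand_nonempty[of S] by auto
next
  case (Cons u U)
  obtain d L where u: "u = (d,L)" by (cases u)
  have L: "0 < L" using Cons.prems(2) u normal_hd[of d L U] by simp
  have nU: "normal U" using normal_tl[OF Cons.prems(2)] .
  have "sublist (expand S) (expand (u#U)) \<longleftrightarrow> sublist (expand S) (expand U) \<or>
     (\<exists>k. 0 < k \<and> k \<le> L \<and> prefix (expand S) (replicate k d @ expand U))"
    using u sublist_rep by simp
  also have "\<dots> \<longleftrightarrow> rfactor S U \<or> (\<exists>k. 0 < k \<and> k \<le> L \<and> rprefix S ((d,k)#U))"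
  proof -
    have "\<And>k. 0 < k \<Longrightarrow> prefix (expand S) (replicate k d @ expand U) \<longleftrightarrow> rprefix S ((d,k)#U)"
    proof -
      fix k :: nat assume "0 < k"
      hence "normal ((d,k)#U)" using Cons.prems(2) u normal_chg[of d L U k] by simp
      thus "prefix (expand S) (replicate k d @ expand U) \<longleftrightarrow> rprefix S ((d,k)#U)"
        using rprefix_correct[of S "(d,k)#U"] Cons.prems by simp
    qed
    thus ?thesis using Cons.IH Cons.prems nU by blast
  qed
  also have "\<dots> \<longleftrightarrow> rfactor S (u#U)" using rstart_correct[OF Cons.prems(1) L] u by simp
  finally show ?case .
qed

lemma not_sublist_rle:
  "normal S \<Longrightarrow> normal U \<Longrightarrow> \<not> rfactor S U \<Longrightarrow> \<not> sublist (expand S) (expand U)"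
  using rfactor_correct by blast



lemma rep_snoc: "replicate n c @ [c] = replicate (Suc n) c" by (simp add: replicate_append_same)
lemma rep_app: "replicate m c @ replicate n c = replicate (m+n) c" by (simp add: replicate_add)

lemma not_sub_ext:
  assumes "\<not> sublist (replicate (Suc r) c) (P @ replicate r c)"
  shows "\<not> sublist (replicate (Suc (r+t)) c) (P @ replicate (r+t) c)"
proof (induction t)
  case 0 thus ?case using assms by simp
next
  case (Suc t)
  let ?n = "r + t"
  show ?case
  proof
    assume h: "sublist (replicate (Suc (r + Suc t)) c) (P @ replicate (r + Suc t) c)"
    have eq: "P @ replicate (r + Suc t) c = (P @ replicate ?n c) @ [c]"
      by (simp add: replicate_append_same)
    have h2: "sublist (replicate (Suc (Suc ?n)) c) ((P @ replicate ?n c) @ [c])" using h eq by simp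
    from sublist_snoc_cases[OF h2]
    have "sublist (replicate (Suc (Suc ?n)) c) (P @ replicate ?n c) \<or>
          suffix (replicate (Suc (Suc ?n)) c) ((P @ replicate ?n c) @ [c])" .
    thus False
    proof
      assume "sublist (replicate (Suc (Suc ?n)) c) (P @ replicate ?n c)"
      moreover have "sublist (replicate (Suc ?n) c) (replicate (Suc (Suc ?n)) c)"
        by (metis replicate_Suc sublist_Cons_right sublist_order.order_refl)
      ultimately show False using Suc.IH sublist_order.order_trans by blast
    next
      assume "suffix (replicate (Suc (Suc ?n)) c) ((P @ replicate ?n c) @ [c])"
      moreover have "replicate (Suc (Suc ?n)) c = replicate (Suc ?n) c @ [c]" by (simp only: rep_snoc)
      ultimately have "suffix (replicate (Suc ?n) c) (P @ replicate ?n c)"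
        by (metis snoc_suffix_snoc)
      thus False using Suc.IH suffix_imp_sublist by blast
    qed
  qed
qed

lemma tail_ext:
  assumes "rich (P @ replicate r c)" "\<not> sublist (replicate (Suc r) c) (P @ replicate r c)"
  shows "rich (P @ replicate (r+k) c)"
proof -
  have "rich ((P @ replicate r c) @ replicate k c)"
  proof (rule rich_run)
    show "rich (P @ replicate r c)" by fact
  next
    fix t assume "t < k"
    let ?s = "replicate (Suc (r+t)) c"
    have "newpal ?s ((P @ replicate r c) @ replicate t c) c"
      unfolding newpal_def
    proof (intro conjI)
      show "?s \<noteq> []" by simp
      show "?s = rev ?s" by (simp only: rev_replicate)
      show "suffix ?s (((P @ replicate r c) @ replicate t c) @ [c])"
        unfolding suffix_def
        by (rule exI[of _ P]) (simp only: append_assoc rep_snoc rep_app add_Suc_right)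
      show "\<not> sublist ?s ((P @ replicate r c) @ replicate t c)"
        using not_sub_ext[OF assms(2), of t] by (simp add: replicate_add)
    qed
    thus "\<exists>s. newpal s ((P @ replicate r c) @ replicate t c) c" by blast
  qed
  thus ?thesis by (simp add: replicate_add)
qed

lemma small_T0:
  fixes P :: "bool list"
  assumes "length P \<le> 6" "\<not> sublist [True,True] P" "P = [] \<or> last P \<noteq> True"
  shows "rich (P @ replicate k True)"
proof (cases k)
  case 0 thus ?thesis using rich_small_bool[of P] assms(1) by simp
next
  case (Suc k')
  have r1: "rich (P @ replicate 1 True)" using rich_small_bool[of "P @ replicate 1 True"] assms(1) by simp
  have "\<not> sublist (replicate (Suc 1) True) (P @ replicate 1 True)"
  proof
    assume "sublist (replicate (Suc 1) True) (P @ replicate 1 True)"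
    hence "sublist [True,True] (P @ [True])" by (simp add: numeral_2_eq_2)
    hence "sublist [True,True] P \<or> suffix [True,True] (P @ [True])" by (rule sublist_snoc_cases)
    moreover have "\<not> suffix [True,True] (P @ [True])"
      using assms(3) by (cases P rule: rev_cases) (auto simp: suffix_def)
    ultimately show False using assms(2) by blast
  qed
  from tail_ext[OF r1 this, of k'] show ?thesis using Suc by simp
qed

lemma small_T:
  fixes P :: "bool list"
  assumes "length P \<le> 6" "\<not> sublist [True,True] P"
  shows "rich (P @ replicate k True)"
proof (cases "P = [] \<or> last P \<noteq> True")
  case True thus ?thesis using small_T0 assms by blast
next
  case False
  then obtain P' where P': "P = P' @ [True]" by (cases P rule: rev_cases) auto
  have "\<not> sublist [True,True] P'" using assms(2) P' by (meson sublist_append_rightI sublist_order.order_trans)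
  moreover have "P' = [] \<or> last P' \<noteq> True"
  proof (cases P' rule: rev_cases)
    case (snoc P'' x)
    show ?thesis
    proof (rule ccontr)
      assume "\<not> (P' = [] \<or> last P' \<noteq> True)"
      hence "x = True" using snoc by simp
      hence "sublist [True,True] P" using P' snoc by (simp add: sublist_def) (metis append.left_neutral append_Cons append_assoc)
      thus False using assms(2) by blast
    qed
  qed simp
  moreover have "length P' \<le> 6" using assms(1) P' by simp
  ultimately have "rich (P' @ replicate (Suc k) True)" using small_T0 by blast
  thus ?thesis using P' by (simp add: replicate_append_same)
qed

lemma new_by_rle:
  "normal S \<Longrightarrow> normal U \<Longrightarrow> \<not> rfactor S U \<Longrightarrow> s = expand S \<Longrightarrow> u = expand U \<Longrightarrow> \<not> sublist s u"
  using not_sublist_rle by blast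

lemma suffix_rep:
  "k \<le> n \<Longrightarrow> suffix (replicate k c @ X) (Y @ replicate n c @ X)"
proof -
  assume "k \<le> n"
  hence "replicate n c = replicate (n-k) c @ replicate k c" by (simp add: replicate_add[symmetric])
  thus ?thesis unfolding suffix_def by (intro exI[of _ "Y @ replicate (n-k) c"]) simp
qed



lemma main_gen:
  assumes "rich (Pre @ replicate x4 True)"
    "\<And>t. t<x5 \<Longrightarrow> \<exists>s. newpal s ((Pre @ replicate x4 True) @ replicate t False) False"
    "\<And>t. t<x6 \<Longrightarrow> \<exists>s. newpal s ((Pre @ replicate x4 True @ replicate x5 False) @ replicate t True) True"
  shows "rich (Pre @ replicate x4 True @ replicate x5 False @ replicate x6 True)"
proof -
  have "rich ((Pre @ replicate x4 True) @ replicate x5 False)"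
    by (rule rich_run[OF assms(1) assms(2)])
  hence r: "rich (Pre @ replicate x4 True @ replicate x5 False)" by simp
  have "rich ((Pre @ replicate x4 True @ replicate x5 False) @ replicate x6 True)"
    by (rule rich_run[OF r assms(3)])
  thus ?thesis by simp
qed

lemma suffix_rep':
  "k \<le> n \<Longrightarrow> w = Y @ replicate n c @ X \<Longrightarrow> suffix (replicate k c @ X) w"
  by (simp add: suffix_rep)

lemma suffix_triv: "w = Y @ X \<Longrightarrow> suffix X w"
  by (auto simp: suffix_def)

lemma newpalI:
  "s \<noteq> [] \<Longrightarrow> s = rev s \<Longrightarrow> suffix s (u @ [x]) \<Longrightarrow> \<not> sublist s u \<Longrightarrow> newpal s u x"
  by (simp add: newpal_def)

lemmas rle_simps = rfactor.simps rstart.simps rprefix.simps normal.simps expand.simps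


lemma V1:
  assumes x4: "2 \<le> x4" and x5: "0 < x5" and sum: "x5 \<le> 4"
  shows "rich (([]) @ replicate x4 True @ replicate x5 False @ replicate x6 True)"
proof (rule main_gen)
  show "rich (([]) @ replicate x4 True)"
    using small_T[of "[]"] by simp
next
  fix t assume t: "t < x5"
  let ?u = "(([]) @ replicate x4 True) @ replicate t False"
  let ?U = "[(True,x4)] @ (if t = 0 then [] else [(False,t)])"
  have uU: "?u = expand ?U" by (cases "t = 0") simp_all
  have nU: "normal ?U" using x4 x5 sum by (cases "t = 0") simp_all
  show "\<exists>s. newpal s ?u False"
  proof (cases "True")
    case True
    let ?S = "[(False, Suc t)]"
    have "newpal (expand ?S) ?u False"
    proof (rule newpalI)
      show "expand ?S \<noteq> []" by simp
      show "expand ?S = rev (expand ?S)" by (simp add: replicate_append_same)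
      show "suffix (expand ?S) (?u @ [False])"
        by (rule suffix_triv[of _ "([]) @ replicate x4 True"])
           (simp add: replicate_append_same)
      show "\<not> sublist (expand ?S) ?u"
        by (rule new_by_rle[OF _ nU _ refl uU]) (use True x4 x5 sum in \<open>auto simp: rle_simps\<close>)
    qed
    thus ?thesis by blast
  next
    case False
    thus ?thesis by simp
  qed
next
  fix t assume t: "t < x6"
  let ?u = "(([]) @ replicate x4 True @ replicate x5 False) @ replicate t True"
  let ?U = "[(True,x4), (False,x5)] @ (if t = 0 then [] else [(True,t)])"
  have uU: "?u = expand ?U" by (cases "t = 0") simp_all
  have nU: "normal ?U" using x4 x5 sum by (cases "t = 0") simp_all
  show "\<exists>s. newpal s ?u True"
  proof (cases "x4 < Suc t")
    case True
    let ?S = "[(True, Suc t)]"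
    have "newpal (expand ?S) ?u True"
    proof (rule newpalI)
      show "expand ?S \<noteq> []" by simp
      show "expand ?S = rev (expand ?S)" by (simp add: replicate_append_same)
      show "suffix (expand ?S) (?u @ [True])"
        by (rule suffix_triv[of _ "([]) @ replicate x4 True @ replicate x5 False"])
           (simp add: replicate_append_same)
      show "\<not> sublist (expand ?S) ?u"
        by (rule new_by_rle[OF _ nU _ refl uU]) (use True x4 x5 sum in \<open>auto simp: rle_simps\<close>)
    qed
    thus ?thesis by blast
  next
    case False
    hence tx: "Suc t \<le> x4" by simp
    show ?thesis
    proof (cases "False")
      case True
      thus ?thesis by simp
    next
      case False
      let ?S = "[(True, Suc t), (False, x5), (True, Suc t)]"
      have "newpal (expand ?S) ?u True"
      proof (rule newpalI)
        show "expand ?S \<noteq> []" by simp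
        show "expand ?S = rev (expand ?S)" by (simp add: replicate_append_same)
        show "suffix (expand ?S) (?u @ [True])"
          unfolding expand.simps append_Nil2 by (rule suffix_rep'[OF tx, of _ "[]"]) (simp add: replicate_append_same)
        show "\<not> sublist (expand ?S) ?u"
          by (rule new_by_rle[OF _ nU _ refl uU]) (use False tx x4 x5 sum in \<open>auto simp: rle_simps\<close>)
      qed
      thus ?thesis by blast
    qed
  qed
qed

lemma V2:
  assumes y: "0 < y" and x4: "2 \<le> x4" and x5: "0 < x5" and sum: "y + x5 \<le> 4"
  shows "rich ((replicate y False) @ replicate x4 True @ replicate x5 False @ replicate x6 True)"
proof (rule main_gen)
  show "rich ((replicate y False) @ replicate x4 True)"
  proof (rule small_T)
    show "length (replicate y False) \<le> 6" using y sum by simp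
    show "\<not> sublist [True, True] (replicate y False)"
      by (rule new_by_rle[of "[(True,2)]" "[(False,y)]"]) (use y in \<open>auto simp: rle_simps numeral_2_eq_2\<close>)
  qed
next
  fix t assume t: "t < x5"
  let ?u = "((replicate y False) @ replicate x4 True) @ replicate t False"
  let ?U = "[(False,y), (True,x4)] @ (if t = 0 then [] else [(False,t)])"
  have uU: "?u = expand ?U" by (cases "t = 0") simp_all
  have nU: "normal ?U" using y x4 x5 sum by (cases "t = 0") simp_all
  show "\<exists>s. newpal s ?u False"
  proof (cases "y < Suc t")
    case True
    let ?S = "[(False, Suc t)]"
    have "newpal (expand ?S) ?u False"
    proof (rule newpalI)
      show "expand ?S \<noteq> []" by simp
      show "expand ?S = rev (expand ?S)" by (simp add: replicate_append_same)
      show "suffix (expand ?S) (?u @ [False])"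
        by (rule suffix_triv[of _ "(replicate y False) @ replicate x4 True"])
           (simp add: replicate_append_same)
      show "\<not> sublist (expand ?S) ?u"
        by (rule new_by_rle[OF _ nU _ refl uU]) (use True y x4 x5 sum in \<open>auto simp: rle_simps\<close>)
    qed
    thus ?thesis by blast
  next
    case False
    hence tz: "Suc t \<le> y" using t y x4 x5 sum by auto
    let ?S = "[(False, Suc t), (True, x4), (False, Suc t)]"
    have "newpal (expand ?S) ?u False"
    proof (rule newpalI)
      show "expand ?S \<noteq> []" by simp
      show "expand ?S = rev (expand ?S)" by (simp add: replicate_append_same)
      show "suffix (expand ?S) (?u @ [False])"
        unfolding expand.simps append_Nil2 by (rule suffix_rep'[OF tz, of _ "[]"]) (simp add: replicate_append_same)
      show "\<not> sublist (expand ?S) ?u"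
        by (rule new_by_rle[OF _ nU _ refl uU]) (use tz y x4 x5 sum in \<open>auto simp: rle_simps\<close>)
    qed
    thus ?thesis by blast
  qed
next
  fix t assume t: "t < x6"
  let ?u = "((replicate y False) @ replicate x4 True @ replicate x5 False) @ replicate t True"
  let ?U = "[(False,y), (True,x4), (False,x5)] @ (if t = 0 then [] else [(True,t)])"
  have uU: "?u = expand ?U" by (cases "t = 0") simp_all
  have nU: "normal ?U" using y x4 x5 sum by (cases "t = 0") simp_all
  show "\<exists>s. newpal s ?u True"
  proof (cases "x4 < Suc t")
    case True
    let ?S = "[(True, Suc t)]"
    have "newpal (expand ?S) ?u True"
    proof (rule newpalI)
      show "expand ?S \<noteq> []" by simp
      show "expand ?S = rev (expand ?S)" by (simp add: replicate_append_same)
      show "suffix (expand ?S) (?u @ [True])"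
        by (rule suffix_triv[of _ "(replicate y False) @ replicate x4 True @ replicate x5 False"])
           (simp add: replicate_append_same)
      show "\<not> sublist (expand ?S) ?u"
        by (rule new_by_rle[OF _ nU _ refl uU]) (use True y x4 x5 sum in \<open>auto simp: rle_simps\<close>)
    qed
    thus ?thesis by blast
  next
    case False
    hence tx: "Suc t \<le> x4" by simp
    show ?thesis
    proof (cases "False")
      case True
      thus ?thesis by simp
    next
      case False
      let ?S = "[(True, Suc t), (False, x5), (True, Suc t)]"
      have "newpal (expand ?S) ?u True"
      proof (rule newpalI)
        show "expand ?S \<noteq> []" by simp
        show "expand ?S = rev (expand ?S)" by (simp add: replicate_append_same)
        show "suffix (expand ?S) (?u @ [True])"
          unfolding expand.simps append_Nil2 by (rule suffix_rep'[OF tx, of _ "replicate y False"]) (simp add: replicate_append_same)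
        show "\<not> sublist (expand ?S) ?u"
          by (rule new_by_rle[OF _ nU _ refl uU]) (use False tx y x4 x5 sum in \<open>auto simp: rle_simps\<close>)
      qed
      thus ?thesis by blast
    qed
  qed
qed

lemma V3:
  assumes z: "0 < z" and x4: "2 \<le> x4" and x5: "0 < x5" and sum: "z + x5 \<le> 4"
  shows "rich ((True # replicate z False) @ replicate x4 True @ replicate x5 False @ replicate x6 True)"
proof (rule main_gen)
  show "rich ((True # replicate z False) @ replicate x4 True)"
  proof (rule small_T)
    show "length (True # replicate z False) \<le> 6" using z sum by simp
    show "\<not> sublist [True, True] (True # replicate z False)"
      by (rule new_by_rle[of "[(True,2)]" "[(True,1), (False,z)]"]) (use z in \<open>auto simp: rle_simps numeral_2_eq_2\<close>)
  qed
next
  fix t assume t: "t < x5"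
  let ?u = "((True # replicate z False) @ replicate x4 True) @ replicate t False"
  let ?U = "[(True,1), (False,z), (True,x4)] @ (if t = 0 then [] else [(False,t)])"
  have uU: "?u = expand ?U" by (cases "t = 0") simp_all
  have nU: "normal ?U" using z x4 x5 sum by (cases "t = 0") simp_all
  show "\<exists>s. newpal s ?u False"
  proof (cases "z < Suc t")
    case True
    let ?S = "[(False, Suc t)]"
    have "newpal (expand ?S) ?u False"
    proof (rule newpalI)
      show "expand ?S \<noteq> []" by simp
      show "expand ?S = rev (expand ?S)" by (simp add: replicate_append_same)
      show "suffix (expand ?S) (?u @ [False])"
        by (rule suffix_triv[of _ "(True # replicate z False) @ replicate x4 True"])
           (simp add: replicate_append_same)
      show "\<not> sublist (expand ?S) ?u"
        by (rule new_by_rle[OF _ nU _ refl uU]) (use True z x4 x5 sum in \<open>auto simp: rle_simps\<close>)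
    qed
    thus ?thesis by blast
  next
    case False
    hence tz: "Suc t \<le> z" using t z x4 x5 sum by auto
    let ?S = "[(False, Suc t), (True, x4), (False, Suc t)]"
    have "newpal (expand ?S) ?u False"
    proof (rule newpalI)
      show "expand ?S \<noteq> []" by simp
      show "expand ?S = rev (expand ?S)" by (simp add: replicate_append_same)
      show "suffix (expand ?S) (?u @ [False])"
        unfolding expand.simps append_Nil2 by (rule suffix_rep'[OF tz, of _ "[True]"]) (simp add: replicate_append_same)
      show "\<not> sublist (expand ?S) ?u"
        by (rule new_by_rle[OF _ nU _ refl uU]) (use tz z x4 x5 sum in \<open>auto simp: rle_simps\<close>)
    qed
    thus ?thesis by blast
  qed
next
  fix t assume t: "t < x6"
  let ?u = "((True # replicate z False) @ replicate x4 True @ replicate x5 False) @ replicate t True"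
  let ?U = "[(True,1), (False,z), (True,x4), (False,x5)] @ (if t = 0 then [] else [(True,t)])"
  have uU: "?u = expand ?U" by (cases "t = 0") simp_all
  have nU: "normal ?U" using z x4 x5 sum by (cases "t = 0") simp_all
  show "\<exists>s. newpal s ?u True"
  proof (cases "x4 < Suc t")
    case True
    let ?S = "[(True, Suc t)]"
    have "newpal (expand ?S) ?u True"
    proof (rule newpalI)
      show "expand ?S \<noteq> []" by simp
      show "expand ?S = rev (expand ?S)" by (simp add: replicate_append_same)
      show "suffix (expand ?S) (?u @ [True])"
        by (rule suffix_triv[of _ "(True # replicate z False) @ replicate x4 True @ replicate x5 False"])
           (simp add: replicate_append_same)
      show "\<not> sublist (expand ?S) ?u"
        by (rule new_by_rle[OF _ nU _ refl uU]) (use True z x4 x5 sum in \<open>auto simp: rle_simps\<close>)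
    qed
    thus ?thesis by blast
  next
    case False
    hence tx: "Suc t \<le> x4" by simp
    show ?thesis
    proof (cases "t = 0 \<and> z = x5")
      case True
      let ?S = "[(True, 1), (False, z), (True, x4), (False, x5), (True, 1)]"
      have "newpal (expand ?S) ?u True"
      proof (rule newpalI)
        show "expand ?S \<noteq> []" by simp
        show "expand ?S = rev (expand ?S)" using True by simp
        show "suffix (expand ?S) (?u @ [True])"
          by (rule suffix_triv[of _ "[]"]) (use True in simp)
        show "\<not> sublist (expand ?S) ?u"
          by (rule new_by_rle[OF _ nU _ refl uU]) (use True z x4 x5 sum in \<open>auto simp: rle_simps\<close>)
      qed
      thus ?thesis by blast
    next
      case False
      let ?S = "[(True, Suc t), (False, x5), (True, Suc t)]"
      have "newpal (expand ?S) ?u True"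
      proof (rule newpalI)
        show "expand ?S \<noteq> []" by simp
        show "expand ?S = rev (expand ?S)" by (simp add: replicate_append_same)
        show "suffix (expand ?S) (?u @ [True])"
          unfolding expand.simps append_Nil2 by (rule suffix_rep'[OF tx, of _ "True # replicate z False"]) (simp add: replicate_append_same)
        show "\<not> sublist (expand ?S) ?u"
          by (rule new_by_rle[OF _ nU _ refl uU]) (use False tx z x4 x5 sum in \<open>auto simp: rle_simps\<close>)
      qed
      thus ?thesis by blast
    qed
  qed
qed

lemma V4:
  assumes y: "0 < y" and z: "0 < z" and x4: "2 \<le> x4" and x5: "0 < x5" and sum: "y + z + x5 \<le> 4"
  shows "rich ((replicate y False @ True # replicate z False) @ replicate x4 True @ replicate x5 False @ replicate x6 True)"
proof (rule main_gen)
  show "rich ((replicate y False @ True # replicate z False) @ replicate x4 True)"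
  proof (rule small_T)
    show "length (replicate y False @ True # replicate z False) \<le> 6" using y z sum by simp
    show "\<not> sublist [True, True] (replicate y False @ True # replicate z False)"
      by (rule new_by_rle[of "[(True,2)]" "[(False,y), (True,1), (False,z)]"]) (use y z in \<open>auto simp: rle_simps numeral_2_eq_2\<close>)
  qed
next
  fix t assume t: "t < x5"
  let ?u = "((replicate y False @ True # replicate z False) @ replicate x4 True) @ replicate t False"
  let ?U = "[(False,y), (True,1), (False,z), (True,x4)] @ (if t = 0 then [] else [(False,t)])"
  have uU: "?u = expand ?U" by (cases "t = 0") simp_all
  have nU: "normal ?U" using y z x4 x5 sum by (cases "t = 0") simp_all
  show "\<exists>s. newpal s ?u False"
  proof (cases "max y z < Suc t")
    case True
    let ?S = "[(False, Suc t)]"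
    have "newpal (expand ?S) ?u False"
    proof (rule newpalI)
      show "expand ?S \<noteq> []" by simp
      show "expand ?S = rev (expand ?S)" by (simp add: replicate_append_same)
      show "suffix (expand ?S) (?u @ [False])"
        by (rule suffix_triv[of _ "(replicate y False @ True # replicate z False) @ replicate x4 True"])
           (simp add: replicate_append_same)
      show "\<not> sublist (expand ?S) ?u"
        by (rule new_by_rle[OF _ nU _ refl uU]) (use True y z x4 x5 sum in \<open>auto simp: rle_simps\<close>)
    qed
    thus ?thesis by blast
  next
    case False
    hence tz: "Suc t \<le> z" using t y z x4 x5 sum by auto
    let ?S = "[(False, Suc t), (True, x4), (False, Suc t)]"
    have "newpal (expand ?S) ?u False"
    proof (rule newpalI)
      show "expand ?S \<noteq> []" by simp
      show "expand ?S = rev (expand ?S)" by (simp add: replicate_append_same)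
      show "suffix (expand ?S) (?u @ [False])"
        unfolding expand.simps append_Nil2 by (rule suffix_rep'[OF tz, of _ "replicate y False @ [True]"]) (simp add: replicate_append_same)
      show "\<not> sublist (expand ?S) ?u"
        by (rule new_by_rle[OF _ nU _ refl uU]) (use tz y z x4 x5 sum in \<open>auto simp: rle_simps\<close>)
    qed
    thus ?thesis by blast
  qed
next
  fix t assume t: "t < x6"
  let ?u = "((replicate y False @ True # replicate z False) @ replicate x4 True @ replicate x5 False) @ replicate t True"
  let ?U = "[(False,y), (True,1), (False,z), (True,x4), (False,x5)] @ (if t = 0 then [] else [(True,t)])"
  have uU: "?u = expand ?U" by (cases "t = 0") simp_all
  have nU: "normal ?U" using y z x4 x5 sum by (cases "t = 0") simp_all
  show "\<exists>s. newpal s ?u True"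
  proof (cases "x4 < Suc t")
    case True
    let ?S = "[(True, Suc t)]"
    have "newpal (expand ?S) ?u True"
    proof (rule newpalI)
      show "expand ?S \<noteq> []" by simp
      show "expand ?S = rev (expand ?S)" by (simp add: replicate_append_same)
      show "suffix (expand ?S) (?u @ [True])"
        by (rule suffix_triv[of _ "(replicate y False @ True # replicate z False) @ replicate x4 True @ replicate x5 False"])
           (simp add: replicate_append_same)
      show "\<not> sublist (expand ?S) ?u"
        by (rule new_by_rle[OF _ nU _ refl uU]) (use True y z x4 x5 sum in \<open>auto simp: rle_simps\<close>)
    qed
    thus ?thesis by blast
  next
    case False
    hence tx: "Suc t \<le> x4" by simp
    show ?thesis
    proof (cases "t = 0 \<and> z = x5")
      case True
      let ?S = "[(True, 1), (False, z), (True, x4), (False, x5), (True, 1)]"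
      have "newpal (expand ?S) ?u True"
      proof (rule newpalI)
        show "expand ?S \<noteq> []" by simp
        show "expand ?S = rev (expand ?S)" using True by simp
        show "suffix (expand ?S) (?u @ [True])"
          by (rule suffix_triv[of _ "replicate y False"]) (use True in simp)
        show "\<not> sublist (expand ?S) ?u"
          by (rule new_by_rle[OF _ nU _ refl uU]) (use True y z x4 x5 sum in \<open>auto simp: rle_simps\<close>)
      qed
      thus ?thesis by blast
    next
      case False
      let ?S = "[(True, Suc t), (False, x5), (True, Suc t)]"
      have "newpal (expand ?S) ?u True"
      proof (rule newpalI)
        show "expand ?S \<noteq> []" by simp
        show "expand ?S = rev (expand ?S)" by (simp add: replicate_append_same)
        show "suffix (expand ?S) (?u @ [True])"
          unfolding expand.simps append_Nil2 by (rule suffix_rep'[OF tx, of _ "replicate y False @ True # replicate z False"]) (simp add: replicate_append_same)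
        show "\<not> sublist (expand ?S) ?u"
          by (rule new_by_rle[OF _ nU _ refl uU]) (use False tx y z x4 x5 sum in \<open>auto simp: rle_simps\<close>)
      qed
      thus ?thesis by blast
    qed
  qed
qed



lemma noTT_app:
  assumes "\<not> sublist [True,True] A" "\<not> sublist [True,True] B" "\<not> (suffix [True] A \<and> prefix [True] B)"
  shows "\<not> sublist [True,True] (A @ B)"
proof
  assume "sublist [True,True] (A @ B)"
  then consider "sublist [True,True] A" | "sublist [True,True] B"
    | "\<exists>xs1 xs2. [True,True] = xs1 @ xs2 \<and> suffix xs1 A \<and> prefix xs2 B"
    unfolding sublist_append by blast
  thus False
  proof cases
    case 3
    then obtain xs1 xs2 where h: "[True,True] = xs1 @ xs2" "suffix xs1 A" "prefix xs2 B" by blast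
    have "xs1 = [] \<or> xs1 = [True] \<or> xs1 = [True,True]"
      using h(1) by (cases xs1) (auto simp: Cons_eq_append_conv append_eq_Cons_conv)
    thus False
    proof (elim disjE)
      assume "xs1 = []" thus False using h assms(2) prefix_imp_sublist by fastforce
    next
      assume "xs1 = [True]" thus False using h assms(3) by auto
    next
      assume "xs1 = [True,True]" thus False using h assms(1) suffix_imp_sublist by fastforce
    qed
  qed (use assms in auto)
qed

lemma noTT_F: "\<not> sublist [True,True] (replicate n False)"
  using set_mono_sublist by fastforce

lemma noTT_T: "n \<le> 1 \<Longrightarrow> \<not> sublist [True,True] (replicate n True)"
  using sublist_length_le by fastforce

lemma not_suffix_F: "\<not> suffix [True] (replicate n False)"
  using set_mono_sublist suffix_imp_sublist by fastforce

lemma not_prefix_F: "0 < n \<Longrightarrow> \<not> prefix [True] (replicate n False @ X)"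
  by (cases n) auto

lemma not_prefix_F0: "\<not> prefix [True] (replicate n False)"
  by (cases n) auto

lemma G:
  fixes x1 x2 x3 x4 x5 x6 :: nat
  assumes x2: "x2 \<le> 1" and sum: "x1 + x3 + x5 \<le> 4"
  shows "rich (replicate x1 False @ replicate x2 True @ replicate x3 False @ replicate x4 True @ replicate x5 False @ replicate x6 True)"
proof (cases "x5 = 0")
  case True
  show ?thesis
  proof (cases "x3 = 0")
    case True
    have "rich (replicate x1 False @ replicate (x2+x4+x6) True)"
      by (rule small_T) (use sum noTT_F in auto)
    thus ?thesis using True \<open>x5 = 0\<close> by (simp add: replicate_add)
  next
    case False
    have "\<not> sublist [True,True] (replicate x1 False @ replicate x2 True @ replicate x3 False)"
      by (intro noTT_app noTT_F noTT_T x2) (use False not_suffix_F not_prefix_F0 in auto)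
    hence "rich ((replicate x1 False @ replicate x2 True @ replicate x3 False) @ replicate (x4+x6) True)"
      by (intro small_T) (use sum x2 in auto)
    thus ?thesis using \<open>x5 = 0\<close> by (simp add: replicate_add)
  qed
next
  case False
  hence x5: "0 < x5" by simp
  show ?thesis
  proof (cases "x4 = 0")
    case True
    have "\<not> sublist [True,True] (replicate x1 False @ replicate x2 True @ replicate (x3+x5) False)"
      by (intro noTT_app noTT_F noTT_T x2) (use x5 not_suffix_F not_prefix_F0 in auto)
    hence "rich ((replicate x1 False @ replicate x2 True @ replicate (x3+x5) False) @ replicate x6 True)"
      by (intro small_T) (use sum x2 in auto)
    thus ?thesis using True by (simp add: replicate_add)
  next
    case False
    hence x4: "0 < x4" by simp
    show ?thesis
    proof (cases "x3 = 0")
      case True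
      hence eq: "replicate x1 False @ replicate x2 True @ replicate x3 False @ replicate x4 True @ replicate x5 False @ replicate x6 True
        = replicate x1 False @ replicate (x2+x4) True @ replicate x5 False @ replicate x6 True"
        by (simp add: replicate_add)
      show ?thesis
      proof (cases "x2 + x4 \<le> 1")
        case True
        have "\<not> sublist [True,True] (replicate x1 False @ replicate (x2+x4) True @ replicate x5 False)"
          by (intro noTT_app noTT_F noTT_T True) (use x5 not_suffix_F not_prefix_F0 in auto)
        hence "rich ((replicate x1 False @ replicate (x2+x4) True @ replicate x5 False) @ replicate x6 True)"
          by (intro small_T) (use sum True in auto)
        thus ?thesis unfolding eq by simp
      next
        case False
        show ?thesis
        proof (cases "x1 = 0")
          case True
          have "rich ([] @ replicate (x2+x4) True @ replicate x5 False @ replicate x6 True)"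
            by (rule V1) (use False x5 sum in auto)
          thus ?thesis unfolding eq using True by simp
        next
          case False
          have "rich (replicate x1 False @ replicate (x2+x4) True @ replicate x5 False @ replicate x6 True)"
            by (rule V2) (use False \<open>\<not> x2 + x4 \<le> 1\<close> x5 sum in auto)
          thus ?thesis unfolding eq .
        qed
      qed
    next
      case False
      hence x3: "0 < x3" by simp
      show ?thesis
      proof (cases "x4 \<le> 1")
        case True
        have "\<not> sublist [True,True] (replicate x1 False @ replicate x2 True @ replicate x3 False @ replicate x4 True @ replicate x5 False)"
          by (intro noTT_app noTT_F noTT_T True x2) (use x3 x5 not_suffix_F not_prefix_F not_prefix_F0 in auto)
        hence "rich ((replicate x1 False @ replicate x2 True @ replicate x3 False @ replicate x4 True @ replicate x5 False) @ replicate x6 True)"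
          by (intro small_T) (use sum True x2 in auto)
        thus ?thesis by simp
      next
        case False
        hence x4': "2 \<le> x4" by simp
        show ?thesis
        proof (cases "x2 = 0")
          case True
          have "rich (replicate (x1+x3) False @ replicate x4 True @ replicate x5 False @ replicate x6 True)"
            by (rule V2) (use x3 x4' x5 sum in auto)
          thus ?thesis using True by (simp add: replicate_add)
        next
          case False
          hence x2': "x2 = 1" using x2 by simp
          show ?thesis
          proof (cases "x1 = 0")
            case True
            have "rich ((True # replicate x3 False) @ replicate x4 True @ replicate x5 False @ replicate x6 True)"
              by (rule V3) (use x3 x4' x5 sum True in auto)
            thus ?thesis using True x2' by simp
          next
            case False
            have "rich ((replicate x1 False @ True # replicate x3 False) @ replicate x4 True @ replicate x5 False @ replicate x6 True)"
              by (rule V4) (use False x3 x4' x5 sum in auto)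
            thus ?thesis using x2' by simp
          qed
        qed
      qed
    qed
  qed
qed



lemma rich_rev: "rich v \<Longrightarrow> rich (rev v)"
proof -
  have "pal_factors (rev v) = pal_factors v"
    by (auto simp: pal_factors_alt sublist_rev_right)
  thus "rich v \<Longrightarrow> rich (rev v)" unfolding rich_def by simp
qed

lemma BR_rev: "v \<in> BR w \<Longrightarrow> rev v \<in> BR (rev w)"
proof -
  assume "v \<in> BR w"
  then obtain Bs where Bs: "v = concat (rev Bs)" "Bs \<noteq> []" "\<forall>B\<in>set Bs. B \<noteq> []" "concat Bs = w"
    unfolding BR_def by blast
  let ?Cs = "rev (map rev Bs)"
  have "rev v = concat (rev ?Cs)" using Bs(1) by (simp add: rev_concat rev_map)
  moreover have "concat ?Cs = rev w" using Bs(4)[symmetric] by (simp add: rev_concat rev_map)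
  moreover have "?Cs \<noteq> []" "\<forall>B\<in>set ?Cs. B \<noteq> []" using Bs(2,3) by auto
  ultimately show ?thesis unfolding BR_def by blast
qed

definition BR0 :: "'a list \<Rightarrow> 'a list \<Rightarrow> bool" where
  "BR0 w v \<longleftrightarrow> v \<in> BR w \<or> (w = [] \<and> v = [])"

lemma BR_rec:
  assumes "v \<in> BR w"
  shows "\<exists>w1 B v'. w = w1 @ B \<and> B \<noteq> [] \<and> v = B @ v' \<and> BR0 w1 v'"
proof -
  obtain Bs where Bs: "v = concat (rev Bs)" "Bs \<noteq> []" "\<forall>B\<in>set Bs. B \<noteq> []" "concat Bs = w"
    using assms unfolding BR_def by blast
  obtain Bs0 B where BB: "Bs = Bs0 @ [B]" using Bs(2) by (cases Bs rule: rev_cases) auto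
  have "BR0 (concat Bs0) (concat (rev Bs0))"
  proof (cases "Bs0 = []")
    case True thus ?thesis by (simp add: BR0_def)
  next
    case False
    thus ?thesis using Bs(3) BB unfolding BR0_def BR_def by auto
  qed
  moreover have "w = concat Bs0 @ B" "v = B @ concat (rev Bs0)" "B \<noteq> []" using Bs BB by auto
  ultimately show ?thesis by blast
qed

lemma BR_len_set: "v \<in> BR w \<Longrightarrow> length v = length w \<and> set v = set w"
proof -
  assume "v \<in> BR w"
  then obtain Bs where Bs: "v = concat (rev Bs)" "concat Bs = w" unfolding BR_def by blast
  have "length (concat (rev Bs)) = length (concat Bs)"
    by (simp add: length_concat rev_map[symmetric] sum_list_rev)
  moreover have "set (concat (rev Bs)) = set (concat Bs)" by simp
  ultimately show ?thesis using Bs by simp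
qed

lemma BR0_rep: "BR0 (replicate n c) v \<Longrightarrow> v = replicate n c"
proof -
  assume h: "BR0 (replicate n c) v"
  show ?thesis
  proof (cases "v \<in> BR (replicate n c)")
    case True
    hence "length v = n" "set v \<subseteq> {c}" using BR_len_set[OF True] by auto
    thus ?thesis by (metis replicate_length_same singletonD subsetD)
  next
    case False thus ?thesis using h by (simp add: BR0_def)
  qed
qed

lemma split_ab:
  assumes "replicate n a @ replicate k b = w1 @ B" "B \<noteq> []"
  shows "(\<exists>j. 0 < j \<and> j \<le> k \<and> B = replicate j b \<and> w1 = replicate n a @ replicate (k-j) b)
       \<or> (\<exists>l. 0 < l \<and> l \<le> n \<and> B = replicate l a @ replicate k b \<and> w1 = replicate (n-l) a)"
proof -
  let ?X = "replicate n a @ replicate k b"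
  have w1: "w1 = take (length ?X - length B) ?X" and B: "B = drop (length ?X - length B) ?X"
    using assms(1) by (metis append_eq_conv_conj add_diff_cancel_right' length_append)+
  have lB: "length B \<le> n + k" using assms(1) by (metis add_leE length_append length_replicate le_refl)
  show ?thesis
  proof (cases "length B \<le> k")
    case True
    hence e: "n + k - length B = n + (k - length B)" by simp
    have "B = replicate (length B) b" "w1 = replicate n a @ replicate (k - length B) b"
      using B w1 lB True by (simp_all add: min_def) arith
    thus ?thesis using True assms(2) by (intro disjI1 exI[of _ "length B"]) auto
  next
    case False
    hence "B = replicate (length B - k) a @ replicate k b" "w1 = replicate (n - (length B - k)) a"
      using B w1 lB by (simp_all add: min_def)
    thus ?thesis using False lB by (intro disjI2 exI[of _ "length B - k"]) auto
  qed
qed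

lemma BR0_ab:
  "BR0 (replicate n a @ replicate k b) v \<Longrightarrow>
     \<exists>y1 y2 y3 y4. v = replicate y1 b @ replicate y2 a @ replicate y3 b @ replicate y4 a \<and> y1 + y3 = k"
proof (induction k arbitrary: v rule: less_induct)
  case (less k)
  show ?case
  proof (cases "v \<in> BR (replicate n a @ replicate k b)")
    case False
    hence "v = []" "k = 0" using less.prems by (auto simp: BR0_def)
    thus ?thesis by (intro exI[of _ 0]) simp
  next
    case True
    then obtain w1 B v' where d: "replicate n a @ replicate k b = w1 @ B" "B \<noteq> []" "v = B @ v'" "BR0 w1 v'"
      using BR_rec by blast
    from split_ab[OF d(1,2)] show ?thesis
    proof (elim disjE exE conjE)
      fix j assume j: "0 < j" "j \<le> k" "B = replicate j b" "w1 = replicate n a @ replicate (k-j) b"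
      obtain y1 y2 y3 y4 where y: "v' = replicate y1 b @ replicate y2 a @ replicate y3 b @ replicate y4 a" "y1 + y3 = k - j"
        using less.IH[of "k-j" v'] j d(4) by auto
      show ?thesis
        by (intro exI[of _ "j+y1"] exI[of _ y2] exI[of _ y3] exI[of _ y4])
           (use y j d(3) in \<open>simp add: replicate_add\<close>)
    next
      fix l assume l: "0 < l" "l \<le> n" "B = replicate l a @ replicate k b" "w1 = replicate (n-l) a"
      have "v' = replicate (n-l) a" using d(4) l(4) BR0_rep[of "n-l" a v'] by simp
      thus ?thesis
        by (intro exI[of _ 0] exI[of _ l] exI[of _ k] exI[of _ "n-l"]) (use d(3) l in simp)
    qed
  qed
qed

lemma split_aba:
  assumes "replicate n a @ replicate m b @ [a] = w1 @ B" "B \<noteq> []"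
  shows "(B = [a] \<and> w1 = replicate n a @ replicate m b)
       \<or> (\<exists>j. 0 < j \<and> j \<le> m \<and> B = replicate j b @ [a] \<and> w1 = replicate n a @ replicate (m-j) b)
       \<or> (\<exists>l. 0 < l \<and> l \<le> n \<and> B = replicate l a @ replicate m b @ [a] \<and> w1 = replicate (n-l) a)"
proof -
  obtain B' x where Bx: "B = B' @ [x]" using assms(2) by (cases B rule: rev_cases) auto
  have e: "replicate n a @ replicate m b = w1 @ B'" "x = a" using assms(1) Bx by auto
  show ?thesis
  proof (cases "B' = []")
    case True thus ?thesis using e Bx by simp
  next
    case False
    from split_ab[OF e(1) False] show ?thesis using Bx e(2) by auto
  qed
qed

lemma classify:
  assumes "v \<in> BR (replicate n a @ replicate m b @ [a])"
  shows "\<exists>x1 x2 x3 x4 x5 x6. x2 \<le> 1 \<and> x1 + x3 + x5 = m \<and>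
     v = replicate x1 b @ replicate x2 a @ replicate x3 b @ replicate x4 a @ replicate x5 b @ replicate x6 a"
proof -
  obtain w1 B v' where d: "replicate n a @ replicate m b @ [a] = w1 @ B" "B \<noteq> []" "v = B @ v'" "BR0 w1 v'"
    using BR_rec[OF assms] by blast
  from split_aba[OF d(1,2)] show ?thesis
  proof (elim disjE exE conjE)
    assume h: "B = [a]" "w1 = replicate n a @ replicate m b"
    obtain y1 y2 y3 y4 where y: "v' = replicate y1 b @ replicate y2 a @ replicate y3 b @ replicate y4 a" "y1 + y3 = m"
      using BR0_ab[of n a m b v'] d(4) h(2) by auto
    show ?thesis
      by (intro exI[of _ 0] exI[of _ 1] exI[of _ y1] exI[of _ y2] exI[of _ y3] exI[of _ y4])
         (use y h d(3) in simp)
  next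
    fix j assume j: "0 < j" "j \<le> m" "B = replicate j b @ [a]" "w1 = replicate n a @ replicate (m-j) b"
    obtain y1 y2 y3 y4 where y: "v' = replicate y1 b @ replicate y2 a @ replicate y3 b @ replicate y4 a" "y1 + y3 = m - j"
      using BR0_ab[of n a "m-j" b v'] d(4) j(4) by auto
    show ?thesis
      by (intro exI[of _ j] exI[of _ 1] exI[of _ y1] exI[of _ y2] exI[of _ y3] exI[of _ y4])
         (use y j d(3) in simp)
  next
    fix l assume l: "0 < l" "l \<le> n" "B = replicate l a @ replicate m b @ [a]" "w1 = replicate (n-l) a"
    have "v' = replicate (n-l) a" using d(4) l(4) BR0_rep[of "n-l" a v'] by simp
    hence "v = replicate l a @ replicate m b @ replicate (Suc (n-l)) a" using d(3) l(3) by simp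
    thus ?thesis
      by (intro exI[of _ 0] exI[of _ 0] exI[of _ 0] exI[of _ l] exI[of _ m] exI[of _ "Suc (n-l)"]) simp
  qed
qed

lemma rich_family:
  fixes a b :: 'a
  assumes "a \<noteq> b" "m \<le> 4" "v \<in> BR (replicate n a @ replicate m b @ [a])"
  shows "rich v"
proof -
  obtain x1 x2 x3 x4 x5 x6 where x: "x2 \<le> 1" "x1 + x3 + x5 = m"
    "v = replicate x1 b @ replicate x2 a @ replicate x3 b @ replicate x4 a @ replicate x5 b @ replicate x6 a"
    using classify[OF assms(3)] by blast
  let ?g = "\<lambda>x. if x then a else b"
  have inj: "inj ?g" using assms(1) by (auto simp: inj_def split: if_splits)
  have "rich (replicate x1 False @ replicate x2 True @ replicate x3 False @ replicate x4 True @ replicate x5 False @ replicate x6 True)"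
    by (rule G) (use x assms(2) in auto)
  from rich_map[OF inj this] show ?thesis using x(3) by simp
qed

theorem mainTheorem13:
  fixes a b :: 'a and n1 n2 :: nat and w v :: "'a list"
  assumes "a \<noteq> b"
    and "n1 \<ge> 1"
    and "n2 \<in> {3, 4}"
    and "w = replicate n1 a @ replicate n2 b @ [a] \<or> w = [a] @ replicate n2 b @ replicate n1 a"
    and "v \<in> BR w"
  shows "rich v"
proof -
  have m: "n2 \<le> 4" using assms(3) by auto
  from assms(4) show ?thesis
  proof
    assume "w = replicate n1 a @ replicate n2 b @ [a]"
    thus ?thesis using rich_family[OF assms(1) m] assms(5) by simp
  next
    assume "w = [a] @ replicate n2 b @ replicate n1 a"
    hence "rev w = replicate n1 a @ replicate n2 b @ [a]" by simp
    hence "rev v \<in> BR (replicate n1 a @ replicate n2 b @ [a])" using BR_rev[OF assms(5)] by simp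
    hence "rich (rev v)" using rich_family[OF assms(1) m] by blast
    thus ?thesis using rich_rev[of "rev v"] by simp
  qed
qed

end
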